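(* There exists a constant $C>0$ such that for every $\varrho>0$, $$\operatorname*{ess\,sup}_{|v-u_1|\le\varrho}\int_{|v'-u_1|\ge\varrho}k(v',v)\,dv'\le C.$$
   Context: Fix masses $m,m_1>0$, a constant restitution coefficient $\epsilon\in(0,1)$, a bulk velocity $u_1\in\mathbb R^3$ and a temperature $\vartheta_1>0$. Set $\alpha=\frac{m_1}{m+m_1}$, $\beta=\frac{1-\epsilon}{2}$, $\mu=\frac{1-2\alpha(1-\beta)}{\alpha(1-\beta)}$ (so $1+\mu>0$), and $k(v,v')=\big(\frac{m_1}{2\pi\vartheta_1}\big)^{1/2}|v-v'|^{-1}\exp\big\{-\frac{m_1}{8\vartheta_1}\big((1+\mu)|v-v'|+\frac{|v-u_1|^2-|v'-u_1|^2}{|v-v'|}\big)^2\big\}$. *)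

theory Defs
  imports "HOL-Analysis.Analysis" "HOL-Probability.Essential_Supremum"
begin

definition alpha_c :: "real \<Rightarrow> real \<Rightarrow> real" where
  "alpha_c m m1 = m1 / (m + m1)"

definition beta_c :: "real \<Rightarrow> real" where
  "beta_c eps = (1 - eps) / 2"

definition mu_c :: "real \<Rightarrow> real \<Rightarrow> real \<Rightarrow> real" where
  "mu_c m m1 eps =
     (1 - 2 * alpha_c m m1 * (1 - beta_c eps)) / (alpha_c m m1 * (1 - beta_c eps))"

text \<open>The kernel k(v,v') on R^3 (for v = v' the formula is undefined; this is a null set).\<close>
definition kern :: "real \<Rightarrow> real \<Rightarrow> real \<Rightarrow> real^3 \<Rightarrow> real \<Rightarrow> real^3 \<Rightarrow> real^3 \<Rightarrow> real" where
  "kern m m1 eps u1 th1 v v' =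
     sqrt (m1 / (2 * pi * th1)) * (1 / norm (v - v')) *
     exp (- (m1 / (8 * th1)) *
       ((1 + mu_c m m1 eps) * norm (v - v')
        + ((norm (v - u1))\<^sup>2 - (norm (v' - u1))\<^sup>2) / norm (v - v'))\<^sup>2)"

end

theory Submission
  imports Defs
begin

definition phi :: "real \<Rightarrow> real \<Rightarrow> real" where
  "phi b s = indicator {0..1} s * s powr (-1/3) + indicator {1..} s * (s powr (-2) * (1/b))"

lemma phi_meas[measurable]: "phi b \<in> borel_measurable borel"
  unfolding phi_def by measurable

lemma phi_nonneg: "0 \<le> phi b s" if "b > 0"
  using that unfolding phi_def by (auto simp: indicator_def)

lemma phi_int: assumes "b > 0" shows "(\<integral>\<^sup>+ s. ennreal (phi b s) \<partial>lborel) < \<infinity>"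
proof -
  have h1: "((\<lambda>s::real. s powr (-1/3::real)) has_integral (1 powr (-1/3+1) / (-1/3+1))) {0..1}"
    by (rule has_integral_powr_from_0) auto
  have h2: "((\<lambda>s::real. s powr (-2::real) * (1/b)) has_integral ((-(1 powr (-2+1)) / (-2+1)) * (1/b))) {1..}"
    by (rule has_integral_mult_left, rule has_integral_powr_to_inf) auto
  have e1: "(\<integral>\<^sup>+ s. ennreal (indicator {0..1} s * s powr (-1/3)) \<partial>lborel) = ennreal (1 powr (-1/3+1) / (-1/3+1))"
    by (rule nn_integral_has_integral_lebesgue[OF _ h1]) auto
  have e2: "(\<integral>\<^sup>+ s. ennreal (indicator {1..} s * (s powr (-2) * (1/b))) \<partial>lborel) = ennreal ((-(1 powr (-2+1)) / (-2+1)) * (1/b))"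
    by (rule nn_integral_has_integral_lebesgue[OF _ h2]) (use assms in auto)
  have "(\<integral>\<^sup>+ s. ennreal (phi b s) \<partial>lborel) = (\<integral>\<^sup>+ s. ennreal (indicator {0..1} s * s powr (-1/3)) + ennreal (indicator {1..} s * (s powr (-2) * (1/b))) \<partial>lborel)"
    unfolding phi_def
    by (intro nn_integral_cong ennreal_plus) (use assms in \<open>auto simp: indicator_def\<close>)
  also have "\<dots> = (\<integral>\<^sup>+ s. ennreal (indicator {0..1} s * s powr (-1/3)) \<partial>lborel) + (\<integral>\<^sup>+ s. ennreal (indicator {1..} s * (s powr (-2) * (1/b))) \<partial>lborel)"
    by (rule nn_integral_add) auto
  finally show ?thesis using e1 e2 by simp 
qed

definition H :: "real \<Rightarrow> real \<Rightarrow> ennreal" where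
  "H b t = (if t = 0 then \<infinity> else ennreal (\<bar>t\<bar> powr (-1/3) * exp (- b * t\<^sup>2)))"

lemma H_meas[measurable]: "H b \<in> borel_measurable borel"
  unfolding H_def by measurable

lemma H_pos: "b > 0 \<Longrightarrow> H b t > 0"
  unfolding H_def by auto

lemma phi_bound: assumes "b > 0" "s > 0" shows "s powr (-1/3) * exp (- b * s\<^sup>2) \<le> phi b s"
proof (cases "s \<le> 1")
  case True
  have "s powr (-1/3) * exp (- b * s\<^sup>2) \<le> s powr (-1/3) * 1"
    by (rule mult_left_mono) (use assms in auto)
  also have "\<dots> \<le> phi b s" using True assms unfolding phi_def by (auto simp: indicator_def)
  finally show ?thesis .
next
  case False
  have a0: "s powr (-1/3) \<le> s powr 0" using False by (subst powr_le_cancel_iff) auto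
  have a: "s powr (-1/3) \<le> 1" using a0 assms by simp
  have "1 + b * s\<^sup>2 \<le> exp (b * s\<^sup>2)" by (rule exp_ge_add_one_self)
  hence "exp (- b * s\<^sup>2) \<le> 1 / (1 + b * s\<^sup>2)" using assms
    by (simp add: exp_minus inverse_eq_divide divide_simps add_pos_nonneg)
  also have "\<dots> \<le> 1 / (b * s\<^sup>2)" using assms by (intro divide_left_mono) (auto intro!: mult_pos_pos add_pos_nonneg)
  also have "\<dots> = s powr (-2) * (1/b)" using assms by (simp add: powr_minus powr_realpow field_simps)
  finally have b: "exp (- b * s\<^sup>2) \<le> s powr (-2) * (1/b)" .
  have "s powr (-1/3) * exp (- b * s\<^sup>2) \<le> 1 * (s powr (-2) * (1/b))"
    by (rule mult_mono[OF a b]) auto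
  also have "\<dots> \<le> phi b s" using False assms unfolding phi_def by (auto simp: indicator_def)
  finally show ?thesis .
qed

lemma H_int: assumes "b > 0" shows "(\<integral>\<^sup>+ t. H b t \<partial>lborel) < \<infinity>"
proof -
  have "(\<integral>\<^sup>+ t. H b t \<partial>lborel) = (\<integral>\<^sup>+ t. ennreal (\<bar>t\<bar> powr (-1/3) * exp (- b * t\<^sup>2)) \<partial>lborel)"
    by (rule nn_integral_cong_AE) (use AE_lborel_singleton[of 0] in \<open>auto simp: H_def elim!: eventually_mono\<close>)
  also have "\<dots> \<le> (\<integral>\<^sup>+ t. ennreal (phi b t) + ennreal (phi b (-t)) \<partial>lborel)"
  proof (rule nn_integral_mono)
    fix t :: real
    show "ennreal (\<bar>t\<bar> powr (-1/3) * exp (- b * t\<^sup>2)) \<le> ennreal (phi b t) + ennreal (phi b (-t))"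
    proof (cases "t = 0")
      case True then show ?thesis by simp
    next
      case False
      have "\<bar>t\<bar> powr (-1/3) * exp (- b * t\<^sup>2) \<le> phi b \<bar>t\<bar>"
        using phi_bound[OF assms, of "\<bar>t\<bar>"] False by simp
      also have "\<dots> \<le> phi b t + phi b (-t)"
        using phi_nonneg[OF assms, of t] phi_nonneg[OF assms, of "-t"] by (cases "t \<ge> 0") auto
      finally show ?thesis
        using phi_nonneg[OF assms, of t] phi_nonneg[OF assms, of "-t"]
        by (simp add: ennreal_plus[symmetric] del: ennreal_plus)
    qed
  qed
  also have "\<dots> = (\<integral>\<^sup>+ t. ennreal (phi b t) \<partial>lborel) + (\<integral>\<^sup>+ t. ennreal (phi b (-t)) \<partial>lborel)"
    by (rule nn_integral_add) auto
  also have "(\<integral>\<^sup>+ t. ennreal (phi b (-t)) \<partial>lborel) = (\<integral>\<^sup>+ t. ennreal (phi b t) \<partial>lborel)"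
    using nn_integral_real_affine[of "\<lambda>t. ennreal (phi b t)" "-1" 0] by simp
  finally show ?thesis using phi_int[OF assms]
    by (simp add: order_le_less_trans)
qed

lemma one_plus_mu_pos:
  assumes "m > 0" "m1 > 0" "0 < eps" "eps < 1"
  shows "1 + mu_c m m1 eps > 0"
proof -
  define a where "a = alpha_c m m1"
  define c where "c = 1 - beta_c eps"
  have a: "0 < a" "a < 1" using assms unfolding a_def alpha_c_def by (auto simp: field_simps)
  have c: "0 < c" "c \<le> 1" using assms unfolding c_def beta_c_def by auto
  have ac: "0 < a * c" "a * c < 1" using a c by (auto simp: mult_le_one less_le_trans[OF mult_strict_right_mono[of a 1 c]])
  have nz: "a * c \<noteq> 0" using a c by simp
  have "1 + mu_c m m1 eps = 1 + (1 - 2 * a * c) / (a * c)"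
    unfolding mu_c_def a_def[symmetric] c_def[symmetric] by (simp add: mult.assoc)
  also have "\<dots> = (1 * (a * c) + (1 - 2 * a * c)) / (a * c)" using nz by (rule add_divide_eq_iff)
  also have "\<dots> = (1 - a * c) / (a * c)" by (simp add: algebra_simps)
  finally have "1 + mu_c m m1 eps = (1 - a * c) / (a * c)" .
  thus ?thesis using ac by simp
qed

lemma norm_inv_bound:
  fixes w :: "real^3"
  assumes "\<And>i. i \<in> Basis \<Longrightarrow> w \<bullet> i \<noteq> 0"
  shows "1 / norm w \<le> (\<Prod>i\<in>Basis. \<bar>w \<bullet> i\<bar> powr (-1/3))"
proof -
  have w: "w \<noteq> 0" using assms[OF SOME_Basis] by auto
  have "(\<Prod>i\<in>(Basis::(real^3) set). norm w powr (-1/3)) \<le> (\<Prod>i\<in>Basis. \<bar>w \<bullet> i\<bar> powr (-1/3))"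
    by (intro prod_mono conjI powr_mono2') (use assms in \<open>auto simp: Basis_le_norm\<close>)
  moreover have "(\<Prod>i\<in>(Basis::(real^3) set). norm w powr (-1/3)) = (norm w powr (-1/3)) ^ 3"
    by simp
  moreover have "(norm w powr (-1/3)) ^ 3 = 1 / norm w"
    using w by (subst powr_power) (auto simp: powr_minus_divide)
  ultimately show ?thesis by simp
qed

lemma exp_norm_prod:
  fixes w :: "real^3"
  shows "exp (- B * (norm w)\<^sup>2) = (\<Prod>i\<in>Basis. exp (- B * (w \<bullet> i)\<^sup>2))"
proof -
  have "(norm w)\<^sup>2 = w \<bullet> w" by (simp add: power2_norm_eq_inner)
  also have "\<dots> = (\<Sum>i\<in>Basis. (w \<bullet> i) * (w \<bullet> i))" by (rule euclidean_inner)
  finally have "(norm w)\<^sup>2 = (\<Sum>i\<in>Basis. (w \<bullet> i)\<^sup>2)" by (simp add: power2_eq_square)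
  thus ?thesis by (simp add: sum_distrib_left exp_sum[symmetric])
qed

lemma kern_bound:
  fixes v v' u1 :: "real^3"
  assumes "m > 0" "m1 > 0" "0 < eps" "eps < 1" "th1 > 0"
    and "norm (v - u1) \<le> \<rho>" "\<rho> \<le> norm (v' - u1)"
  defines "B \<equiv> m1 / (8 * th1) * (1 + mu_c m m1 eps)\<^sup>2"
  shows "ennreal (kern m m1 eps u1 th1 v' v) \<le>
         ennreal (sqrt (m1 / (2 * pi * th1))) * (\<Prod>i\<in>Basis. H B ((v' - v) \<bullet> i))"
proof -
  define w where "w = v' - v"
  define c0 where "c0 = sqrt (m1 / (2 * pi * th1))"
  define a where "a = m1 / (8 * th1)"
  define M where "M = 1 + mu_c m m1 eps"
  have M: "M > 0" unfolding M_def by (rule one_plus_mu_pos) (use assms in auto)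
  have a: "a > 0" unfolding a_def using assms by auto
  have B: "B > 0" unfolding B_def using assms M M_def by auto
  have c0: "c0 > 0" unfolding c0_def using assms by auto
  have kdef: "kern m m1 eps u1 th1 v' v = c0 * (1 / norm w) *
     exp (- a * (M * norm w + ((norm (v' - u1))\<^sup>2 - (norm (v - u1))\<^sup>2) / norm w)\<^sup>2)"
    unfolding kern_def w_def c0_def a_def M_def ..
  show ?thesis
  proof (cases "\<exists>i\<in>Basis. w \<bullet> i = 0")
    case True
    then obtain i where i: "i \<in> Basis" "w \<bullet> i = 0" by auto
    have "(\<Prod>i\<in>Basis. H B (w \<bullet> i)) = H B (w \<bullet> i) * (\<Prod>j\<in>Basis - {i}. H B (w \<bullet> j))"
      using i by (simp add: prod.remove)
    also have "\<dots> = \<infinity>"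
    proof -
      have "(\<Prod>j\<in>Basis - {i}. H B (w \<bullet> j)) > 0"
        using H_pos[OF B] by (auto simp: zero_less_iff_neq_zero prod_zero_iff)
      thus ?thesis using i by (simp add: H_def ennreal_mult_eq_top_iff)
    qed
    finally have "ennreal c0 * (\<Prod>i\<in>Basis. H B (w \<bullet> i)) = \<infinity>"
      using c0 by (simp add: ennreal_mult_eq_top_iff)
    thus ?thesis unfolding w_def c0_def by simp
  next
    case False
    hence nz: "\<And>i. i \<in> Basis \<Longrightarrow> w \<bullet> i \<noteq> 0" by auto
    have w0: "w \<noteq> 0" using nz[OF SOME_Basis] by auto
    have n: "norm w > 0" using w0 by simp
    have d: "(norm (v' - u1))\<^sup>2 - (norm (v - u1))\<^sup>2 \<ge> 0"
      using assms(6,7) by (simp add: power_mono)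
    have X: "M * norm w \<le> M * norm w + ((norm (v' - u1))\<^sup>2 - (norm (v - u1))\<^sup>2) / norm w"
      using d n by simp
    have "(M * norm w)\<^sup>2 \<le> (M * norm w + ((norm (v' - u1))\<^sup>2 - (norm (v - u1))\<^sup>2) / norm w)\<^sup>2"
      by (rule power_mono[OF X]) (use M n in simp)
    hence e: "exp (- a * (M * norm w + ((norm (v' - u1))\<^sup>2 - (norm (v - u1))\<^sup>2) / norm w)\<^sup>2)
          \<le> exp (- B * (norm w)\<^sup>2)"
      using a unfolding B_def a_def[symmetric] M_def[symmetric] by (simp add: power_mult_distrib mult.assoc)
    have "kern m m1 eps u1 th1 v' v \<le> c0 * (1 / norm w) * exp (- B * (norm w)\<^sup>2)"
      unfolding kdef by (rule mult_left_mono[OF e]) (use c0 n in simp)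
    also have "\<dots> \<le> c0 * ((\<Prod>i\<in>Basis. \<bar>w \<bullet> i\<bar> powr (-1/3)) * (\<Prod>i\<in>Basis. exp (- B * (w \<bullet> i)\<^sup>2)))"
      unfolding exp_norm_prod[of B w, symmetric] mult.assoc
      by (intro mult_left_mono mult_right_mono norm_inv_bound nz) (use c0 in auto)
    also have "\<dots> = c0 * (\<Prod>i\<in>Basis. \<bar>w \<bullet> i\<bar> powr (-1/3) * exp (- B * (w \<bullet> i)\<^sup>2))"
      by (simp add: prod.distrib)
    finally have r: "kern m m1 eps u1 th1 v' v \<le> c0 * (\<Prod>i\<in>Basis. \<bar>w \<bullet> i\<bar> powr (-1/3) * exp (- B * (w \<bullet> i)\<^sup>2))" .
    have "(\<Prod>i\<in>Basis. H B (w \<bullet> i)) = (\<Prod>i\<in>Basis. ennreal (\<bar>w \<bullet> i\<bar> powr (-1/3) * exp (- B * (w \<bullet> i)\<^sup>2)))"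
      by (rule prod.cong) (use nz in \<open>auto simp: H_def\<close>)
    also have "\<dots> = ennreal (\<Prod>i\<in>Basis. \<bar>w \<bullet> i\<bar> powr (-1/3) * exp (- B * (w \<bullet> i)\<^sup>2))"
      by (rule prod_ennreal) auto
    finally have p: "(\<Prod>i\<in>Basis. H B (w \<bullet> i)) = ennreal (\<Prod>i\<in>Basis. \<bar>w \<bullet> i\<bar> powr (-1/3) * exp (- B * (w \<bullet> i)\<^sup>2))" .
    show ?thesis
      unfolding w_def[symmetric] c0_def[symmetric] p
      using r c0 by (simp add: ennreal_mult[symmetric] ennreal_leI prod_nonneg)
  qed
qed

theorem proposition4p3:
  fixes m m1 eps th1 :: real and u1 :: "real^3"
  assumes "m > 0" and "m1 > 0" and "0 < eps" and "eps < 1" and "th1 > 0"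
  shows "\<exists>C::real. C > 0 \<and> (\<forall>\<rho>::real. \<rho> > 0 \<longrightarrow>
           esssup (restrict_space lborel (cball u1 \<rho>))
             (\<lambda>v. \<integral>\<^sup>+ v'. ennreal (kern m m1 eps u1 th1 v' v)
                      * indicator {v'. norm (v' - u1) \<ge> \<rho>} v' \<partial>lborel)
           \<le> ennreal C)"
proof -
  define B where "B = m1 / (8 * th1) * (1 + mu_c m m1 eps)\<^sup>2"
  define c0 where "c0 = sqrt (m1 / (2 * pi * th1))"
  have M: "1 + mu_c m m1 eps > 0" by (rule one_plus_mu_pos) (use assms in auto)
  have B: "B > 0" unfolding B_def using assms M by auto
  have c0: "c0 > 0" unfolding c0_def using assms by auto
  have fin: "(\<integral>\<^sup>+ t. H B t \<partial>lborel) \<noteq> \<infinity>" using H_int[OF B] by simp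
  obtain r where r: "r \<ge> 0" "(\<integral>\<^sup>+ t. H B t \<partial>lborel) = ennreal r"
    using fin by (cases "(\<integral>\<^sup>+ t. H B t \<partial>lborel)") auto
  have shift: "(\<integral>\<^sup>+ t. H B (t - s) \<partial>lborel) = ennreal r" for s
    using nn_integral_real_affine[of "\<lambda>t. H B (t - s)" 1 s] r by simp
  have intv: "(\<integral>\<^sup>+ v'. ennreal c0 * (\<Prod>i\<in>Basis. H B ((v' - v) \<bullet> i)) \<partial>lborel) = ennreal (c0 * r ^ 3)"
    for v :: "real^3"
  proof -
    have "(\<integral>\<^sup>+ v'. ennreal c0 * (\<Prod>i\<in>Basis. H B ((v' - v) \<bullet> i)) \<partial>lborel)
        = ennreal c0 * (\<integral>\<^sup>+ v'. (\<Prod>i\<in>Basis. (\<lambda>t. H B (t - v \<bullet> i)) (v' \<bullet> i)) \<partial>lborel)"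
      by (subst nn_integral_cmult[symmetric]) (auto simp: inner_diff_left)
    also have "\<dots> = ennreal c0 * (\<Prod>i\<in>Basis. \<integral>\<^sup>+ t. H B (t - v \<bullet> i) \<partial>lborel)"
      by (subst nn_integral_lborel_prod) auto
    also have "\<dots> = ennreal c0 * ennreal r ^ 3" by (simp add: shift)
    also have "\<dots> = ennreal (c0 * r ^ 3)" using c0 r by (simp add: ennreal_mult ennreal_power)
    finally show ?thesis .
  qed
  show ?thesis
  proof (intro exI conjI allI impI)
    show "c0 * r ^ 3 + 1 > 0" using c0 r by (simp add: add_nonneg_pos)
    fix \<rho> :: real assume "\<rho> > 0"
    show "esssup (restrict_space lborel (cball u1 \<rho>))
             (\<lambda>v. \<integral>\<^sup>+ v'. ennreal (kern m m1 eps u1 th1 v' v)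
                      * indicator {v'. norm (v' - u1) \<ge> \<rho>} v' \<partial>lborel)
           \<le> ennreal (c0 * r ^ 3 + 1)"
    proof (rule esssup_I)
      show "(\<lambda>v. \<integral>\<^sup>+ v'. ennreal (kern m m1 eps u1 th1 v' v)
                      * indicator {v'. norm (v' - u1) \<ge> \<rho>} v' \<partial>lborel)
            \<in> borel_measurable (restrict_space lborel (cball u1 \<rho>))"
        by (rule measurable_restrict_space1) (unfold kern_def, measurable)
      show "AE v in restrict_space lborel (cball u1 \<rho>). (\<integral>\<^sup>+ v'. ennreal (kern m m1 eps u1 th1 v' v)
                      * indicator {v'. norm (v' - u1) \<ge> \<rho>} v' \<partial>lborel) \<le> ennreal (c0 * r ^ 3 + 1)"
      proof (rule AE_I2)
        fix v assume "v \<in> space (restrict_space lborel (cball u1 \<rho>))"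
        hence v: "norm (v - u1) \<le> \<rho>" by (simp add: dist_norm norm_minus_commute)
        have "(\<integral>\<^sup>+ v'. ennreal (kern m m1 eps u1 th1 v' v)
                      * indicator {v'. norm (v' - u1) \<ge> \<rho>} v' \<partial>lborel)
              \<le> (\<integral>\<^sup>+ v'. ennreal c0 * (\<Prod>i\<in>Basis. H B ((v' - v) \<bullet> i)) \<partial>lborel)"
        proof (rule nn_integral_mono)
          fix v' :: "real^3"
          show "ennreal (kern m m1 eps u1 th1 v' v) * indicator {v'. norm (v' - u1) \<ge> \<rho>} v'
                \<le> ennreal c0 * (\<Prod>i\<in>Basis. H B ((v' - v) \<bullet> i))"
          proof (cases "norm (v' - u1) \<ge> \<rho>")
            case True
            thus ?thesis using kern_bound[OF assms v True] unfolding B_def c0_def by simp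
          qed simp
        qed
        also have "\<dots> = ennreal (c0 * r ^ 3)" by (rule intv)
        also have "\<dots> \<le> ennreal (c0 * r ^ 3 + 1)" by (rule ennreal_leI) simp
        finally show "(\<integral>\<^sup>+ v'. ennreal (kern m m1 eps u1 th1 v' v)
                      * indicator {v'. norm (v' - u1) \<ge> \<rho>} v' \<partial>lborel) \<le> ennreal (c0 * r ^ 3 + 1)" .
      qed
    qed
  qed
qed

end
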